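(* Every representation of the relation algebra $31_{65}$ has at least $15$ vertices.
   Context: A cycle type is the multiset of colors of the sides of a triangle, e.g. $caa$ = one side $c$, two sides $a$. $31_{65}$ is the finite symmetric integral relation algebra with atoms $1',a,b,c$ whose mandatory diversity cycle types are exactly $aaa, bbb, ccc, abb, baa, caa, abc$ (so $acc, bcc, cbb$ are forbidden). A representation on a set $X$ (its vertices) is a coloring of all 2-element subsets of $X$ by $a,b,c$, each color used, such that: for every mandatory type $\{h,i,j\}$, every edge $\{x,y\}$ colored $h$ (for each choice of $h$ among the type's colors) and each ordering $(i,j)$ of the remaining two colors, some $z$ has $\{x,z\}$ colored $i$, $\{z,y\}$ colored $j$; and no triangle of a forbidden type occurs. *)

theory Defs
  imports Main "HOL-Library.Multiset"
begin

datatype color = A | B | C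

definition mandatory :: "color multiset set" where
  "mandatory = {{#A,A,A#}, {#B,B,B#}, {#C,C,C#}, {#A,B,B#}, {#B,A,A#}, {#C,A,A#}, {#A,B,C#}}"

definition forbidden :: "color multiset set" where
  "forbidden = {{#A,C,C#}, {#B,C,C#}, {#C,B,B#}}"

text \<open>A representation on vertex set X: col assigns a color to each 2-element subset
  (modelled as a symmetric function on pairs of distinct vertices of X).\<close>
definition is_rep_31_65 :: "'a set \<Rightarrow> ('a \<Rightarrow> 'a \<Rightarrow> color) \<Rightarrow> bool" where
  "is_rep_31_65 X col \<longleftrightarrow>
     (\<forall>x\<in>X. \<forall>y\<in>X. x \<noteq> y \<longrightarrow> col x y = col y x)
   \<and> (\<forall>h. \<exists>x\<in>X. \<exists>y\<in>X. x \<noteq> y \<and> col x y = h)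
   \<and> (\<forall>x\<in>X. \<forall>y\<in>X. x \<noteq> y \<longrightarrow> (\<forall>i j. {#col x y, i, j#} \<in> mandatory \<longrightarrow>
        (\<exists>z\<in>X. z \<noteq> x \<and> z \<noteq> y \<and> col x z = i \<and> col z y = j)))
   \<and> (\<forall>x\<in>X. \<forall>y\<in>X. \<forall>z\<in>X. x \<noteq> y \<and> y \<noteq> z \<and> x \<noteq> z \<longrightarrow>
        {#col x y, col y z, col x z#} \<notin> forbidden)"

end

theory Submission
  imports Defs
begin

locale R31 =
  fixes X :: "'a set" and col :: "'a \<Rightarrow> 'a \<Rightarrow> color"
  assumes rep: "is_rep_31_65 X col"
begin

lemma sym: "x \<in> X \<Longrightarrow> y \<in> X \<Longrightarrow> x \<noteq> y \<Longrightarrow> col x y = col y x"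
  using rep unfolding is_rep_31_65_def by blast

lemma mand: "x \<in> X \<Longrightarrow> y \<in> X \<Longrightarrow> x \<noteq> y \<Longrightarrow> {#col x y, i, j#} \<in> mandatory \<Longrightarrow>
   \<exists>z\<in>X. z \<noteq> x \<and> z \<noteq> y \<and> col x z = i \<and> col z y = j"
  using rep unfolding is_rep_31_65_def by blast

lemma forb: "x \<in> X \<Longrightarrow> y \<in> X \<Longrightarrow> z \<in> X \<Longrightarrow> x \<noteq> y \<Longrightarrow> y \<noteq> z \<Longrightarrow> x \<noteq> z \<Longrightarrow>
   {#col x y, col y z, col x z#} \<notin> forbidden"
  using rep unfolding is_rep_31_65_def by blast

lemma cc: assumes "x \<in> X" "y \<in> X" "z \<in> X" "x \<noteq> y" "y \<noteq> z" "x \<noteq> z"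
  "col x y = C" "col y z = C" shows "col x z = C"
proof (cases "col x z")
  case A then show ?thesis using forb[OF assms(1-6)] assms(7,8)
    by (simp add: forbidden_def add_mset_commute)
next
  case B then show ?thesis using forb[OF assms(1-6)] assms(7,8)
    by (simp add: forbidden_def add_mset_commute)
qed simp

lemma cbb: assumes "x \<in> X" "y \<in> X" "z \<in> X" "x \<noteq> y" "y \<noteq> z" "x \<noteq> z"
  "col x y = B" "col x z = B" shows "col y z \<noteq> C"
  using forb[OF assms(1-6)] assms(7,8)
  by (auto simp add: forbidden_def add_mset_commute)

lemma m_bbb: "x \<in> X \<Longrightarrow> y \<in> X \<Longrightarrow> x \<noteq> y \<Longrightarrow> col x y = B \<Longrightarrow>
   \<exists>z\<in>X. z \<noteq> x \<and> z \<noteq> y \<and> col x z = B \<and> col z y = B"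
  by (rule mand) (auto simp: mandatory_def)

lemma m_bba: "x \<in> X \<Longrightarrow> y \<in> X \<Longrightarrow> x \<noteq> y \<Longrightarrow> col x y = B \<Longrightarrow>
   \<exists>z\<in>X. z \<noteq> x \<and> z \<noteq> y \<and> col x z = B \<and> col z y = A"
  by (rule mand) (auto simp: mandatory_def add_mset_commute)

lemma m_bca: "x \<in> X \<Longrightarrow> y \<in> X \<Longrightarrow> x \<noteq> y \<Longrightarrow> col x y = B \<Longrightarrow>
   \<exists>z\<in>X. z \<noteq> x \<and> z \<noteq> y \<and> col x z = C \<and> col z y = A"
  by (rule mand) (auto simp: mandatory_def add_mset_commute)

lemma m_aca: "x \<in> X \<Longrightarrow> y \<in> X \<Longrightarrow> x \<noteq> y \<Longrightarrow> col x y = A \<Longrightarrow>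
   \<exists>z\<in>X. z \<noteq> x \<and> z \<noteq> y \<and> col x z = C \<and> col z y = A"
  by (rule mand) (auto simp: mandatory_def add_mset_commute)

lemma m_ccc: "x \<in> X \<Longrightarrow> y \<in> X \<Longrightarrow> x \<noteq> y \<Longrightarrow> col x y = C \<Longrightarrow>
   \<exists>z\<in>X. z \<noteq> x \<and> z \<noteq> y \<and> col x z = C \<and> col z y = C"
  by (rule mand) (auto simp: mandatory_def)

lemma bedge: "\<exists>x\<in>X. \<exists>y\<in>X. x \<noteq> y \<and> col x y = B"
  using rep unfolding is_rep_31_65_def by blast

lemma has_c: assumes "x \<in> X" shows "\<exists>q\<in>X. q \<noteq> x \<and> col x q = C"
proof -
  obtain x0 y0 where "x0 \<in> X" "y0 \<in> X" "x0 \<noteq> y0" using bedge by blast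
  then obtain y where y: "y \<in> X" "y \<noteq> x" by metis
  show ?thesis
  proof (cases "col x y")
    case A then show ?thesis using m_aca[OF assms y(1)] y by metis
  next
    case B then show ?thesis using m_bca[OF assms y(1)] y by metis
  next
    case C then show ?thesis using y by metis
  qed
qed

definition K where "K x = {y\<in>X. y = x \<or> (y \<noteq> x \<and> col x y = C)}"

lemma K_sub: "K x \<subseteq> X" unfolding K_def by auto

lemma K_card: assumes "finite X" "x \<in> X" shows "3 \<le> card (K x)"
proof -
  obtain q where q: "q \<in> X" "q \<noteq> x" "col x q = C" using has_c[OF assms(2)] by blast
  then obtain r where r: "r \<in> X" "r \<noteq> x" "r \<noteq> q" "col x r = C"
    using m_ccc[OF assms(2) q(1)] by metis
  have "{x, q, r} \<subseteq> K x" using q r assms unfolding K_def by auto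
  moreover have "card {x, q, r} = 3" using q r by auto
  moreover have "finite (K x)" using K_sub assms(1) finite_subset by blast
  ultimately show ?thesis by (metis card_mono)
qed

lemma K_disj: assumes "p \<in> X" "p' \<in> X" "p \<noteq> p'" "col p p' \<noteq> C"
  shows "K p \<inter> K p' = {}"
proof (rule ccontr)
  assume "K p \<inter> K p' \<noteq> {}"
  then obtain y where y: "y \<in> K p" "y \<in> K p'" by blast
  then have yX: "y \<in> X" unfolding K_def by auto
  show False
  proof (cases "y = p")
    case True
    then show ?thesis using y assms sym[OF assms(1,2,3)] unfolding K_def by auto
  next
    case False
    then have 1: "col p y = C" using y unfolding K_def by auto
    show ?thesis
    proof (cases "y = p'")
      case True then show ?thesis using 1 assms by simp
    next
      case False
      then have "col p' y = C" using y unfolding K_def by auto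
      then have "col y p' = C" using sym[OF assms(2) yX] False by simp
      then have "col p p' = C" using cc[OF assms(1) yX assms(2)] 1 False \<open>y \<noteq> p\<close> assms(3)
        by metis
      then show ?thesis using assms by simp
    qed
  qed
qed

lemma good_pair: assumes "x \<in> X" "a \<in> X" "b \<in> X" "x \<noteq> a" "x \<noteq> b" "a \<noteq> b"
  "col x a = B" "col x b = B" shows "a \<noteq> b \<and> col a b \<noteq> C"
  using cbb[OF assms(1-3) assms(4,6,5) assms(7,8)] assms(6) by simp

lemma five: "\<exists>x\<in>X. \<exists>z\<in>X. \<exists>w1\<in>X. \<exists>w2\<in>X. \<exists>u\<in>X.
  x \<noteq> z \<and> x \<noteq> w1 \<and> x \<noteq> w2 \<and> x \<noteq> u \<and>
  col x z = B \<and> col x w1 = B \<and> col x w2 = B \<and> col x u = B \<and>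
  z \<noteq> w1 \<and> z \<noteq> w2 \<and> z \<noteq> u \<and> w1 \<noteq> w2 \<and> w1 \<noteq> u \<and> w2 \<noteq> u"
proof -
  obtain x z where xz: "x \<in> X" "z \<in> X" "x \<noteq> z" "col x z = B" using bedge by blast
  obtain w1 where w1: "w1 \<in> X" "w1 \<noteq> x" "w1 \<noteq> z" "col x w1 = B" "col w1 z = B"
    using m_bbb[OF xz] by blast
  obtain w2 where w2: "w2 \<in> X" "w2 \<noteq> x" "w2 \<noteq> z" "col x w2 = B" "col w2 z = A"
    using m_bba[OF xz] by blast
  have d12: "w1 \<noteq> w2" using w1 w2 by auto
  have nc: "col w1 w2 \<noteq> C" using cbb[OF xz(1) w1(1) w2(1)] w1 w2 d12 by metis
  have zw1: "col z w1 = B" using sym[OF xz(2) w1(1)] w1 by simp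
  have zw2: "col z w2 = A" using sym[OF xz(2) w2(1)] w2 by simp
  have sw: "col w2 w1 = col w1 w2" using sym[OF w2(1) w1(1)] d12 by simp
  show ?thesis
  proof (cases "col w1 w2")
    case A
    obtain u where u: "u \<in> X" "u \<noteq> x" "u \<noteq> w2" "col x u = B" "col u w2 = B"
      using m_bbb[OF xz(1) w2(1)] w2 by metis
    have "u \<noteq> z" "u \<noteq> w1" using u zw2 A by auto
    then show ?thesis using xz w1 w2 u d12 by metis
  next
    case B
    obtain u where u: "u \<in> X" "u \<noteq> x" "u \<noteq> w1" "col x u = B" "col u w1 = A"
      using m_bba[OF xz(1) w1(1)] w1 by metis
    have "u \<noteq> z" "u \<noteq> w2" using u zw1 sw B by auto
    then show ?thesis using xz w1 w2 u d12 by metis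
  next
    case C then show ?thesis using nc by simp
  qed
qed

lemma main: assumes "finite X" shows "15 \<le> card X"
proof -
  obtain x z w1 w2 u where P: "x \<in> X" "z \<in> X" "w1 \<in> X" "w2 \<in> X" "u \<in> X"
    "x \<noteq> z" "x \<noteq> w1" "x \<noteq> w2" "x \<noteq> u"
    "col x z = B" "col x w1 = B" "col x w2 = B" "col x u = B"
    "z \<noteq> w1" "z \<noteq> w2" "z \<noteq> u" "w1 \<noteq> w2" "w1 \<noteq> u" "w2 \<noteq> u"
    using five by metis
  have D: "\<And>p q. p \<in> {z,w1,w2,u} \<Longrightarrow> q \<in> {z,w1,w2,u} \<Longrightarrow> p \<noteq> q \<Longrightarrow> K p \<inter> K q = {}"
  proof -
    fix p q assume pq: "p \<in> {z,w1,w2,u}" "q \<in> {z,w1,w2,u}" "p \<noteq> q"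
    have "p \<in> X" "q \<in> X" "x \<noteq> p" "x \<noteq> q" "col x p = B" "col x q = B"
      using pq P by auto
    then show "K p \<inter> K q = {}" using K_disj good_pair[OF P(1)] pq(3) by metis
  qed
  have D0: "\<And>p. p \<in> {z,w1,w2,u} \<Longrightarrow> K x \<inter> K p = {}"
  proof -
    fix p assume p: "p \<in> {z,w1,w2,u}"
    then have "p \<in> X" "x \<noteq> p" "col x p = B" using P by auto
    then show "K x \<inter> K p = {}" using K_disj[OF P(1)] by simp
  qed
  have fin: "\<And>p. finite (K p)" using K_sub assms finite_subset by blast
  have c: "\<And>p. p \<in> X \<Longrightarrow> 3 \<le> card (K p)" using K_card assms by blast
  have d: "K w2 \<inter> K u = {}" "K w1 \<inter> K w2 = {}" "K w1 \<inter> K u = {}"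
    "K z \<inter> K w1 = {}" "K z \<inter> K w2 = {}" "K z \<inter> K u = {}"
    "K x \<inter> K z = {}" "K x \<inter> K w1 = {}" "K x \<inter> K w2 = {}" "K x \<inter> K u = {}"
    using D D0 P by auto
  have e1: "card (K w2 \<union> K u) = card (K w2) + card (K u)"
    by (rule card_Un_disjoint) (use fin d in auto)
  have e2: "card (K w1 \<union> (K w2 \<union> K u)) = card (K w1) + card (K w2 \<union> K u)"
    by (rule card_Un_disjoint) (use fin d in \<open>auto simp: Int_Un_distrib\<close>)
  have e3: "card (K z \<union> (K w1 \<union> (K w2 \<union> K u))) = card (K z) + card (K w1 \<union> (K w2 \<union> K u))"
    by (rule card_Un_disjoint) (use fin d in \<open>auto simp: Int_Un_distrib\<close>)
  have e4: "card (K x \<union> (K z \<union> (K w1 \<union> (K w2 \<union> K u)))) = card (K x) + card (K z \<union> (K w1 \<union> (K w2 \<union> K u)))"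
    by (rule card_Un_disjoint) (use fin d in \<open>auto simp: Int_Un_distrib\<close>)
  have sub: "K x \<union> (K z \<union> (K w1 \<union> (K w2 \<union> K u))) \<subseteq> X" using K_sub by blast
  have "15 \<le> card (K x \<union> (K z \<union> (K w1 \<union> (K w2 \<union> K u))))"
    using e1 e2 e3 e4 c[OF P(1)] c[OF P(2)] c[OF P(3)] c[OF P(4)] c[OF P(5)] by linarith
  also have "\<dots> \<le> card X" using card_mono[OF assms sub] .
  finally show ?thesis .
qed
end

theorem mainTheorem10:
  fixes X :: "'a set" and col :: "'a \<Rightarrow> 'a \<Rightarrow> color"
  assumes "is_rep_31_65 X col"
  shows "infinite X \<or> 15 \<le> card X"
  using R31.main[OF R31.intro[OF assms]] by blast

end
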